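(* Let $\eta_3=\int_1^\infty\frac{\mathrm{d}t}{\sqrt{t^6-1}}$ and let $\mathrm{cleafh}_3:(-\eta_3,\eta_3)\to\mathbb{R}$ be the hyperbolic leaf function of basis $3$. For every real $l$ with $2l\in(-\eta_3,\eta_3)$, writing $C=\mathrm{cleafh}_3(l)$, $$\mathrm{cleafh}_3(2l)=\frac{2C^2+2C^4-1}{\sqrt{1+8C^2+8C^6-8C^8}}.$$
   Context: For a natural number $n$, let $\eta_n=\int_1^\infty\frac{\mathrm{d}t}{\sqrt{t^{2n}-1}}$. The hyperbolic leaf function $\mathrm{cleafh}_n$ is the solution $r(l)$ on $(-\eta_n,\eta_n)$ of $\frac{\mathrm{d}^2r}{\mathrm{d}l^2}=n\,r^{2n-1}$ with $r(0)=1$, $r'(0)=0$; it is even, and for $l\ge0$ it is the inverse of $r\mapsto\int_1^r\frac{\mathrm{d}t}{\sqrt{t^{2n}-1}}$, $r\ge1$. *)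

theory Defs
  imports "HOL-Analysis.Analysis"
begin

definition leaf_integrand :: "nat \<Rightarrow> real \<Rightarrow> real" where
  "leaf_integrand n t = 1 / sqrt (t ^ (2 * n) - 1)"

definition eta :: "nat \<Rightarrow> real" where
  "eta n = integral {1..} (leaf_integrand n)"

definition cleafh :: "nat \<Rightarrow> real \<Rightarrow> real" where
  "cleafh n l = (THE r. 1 \<le> r \<and> integral {1..r} (leaf_integrand n) = \<bar>l\<bar>)"

end

theory Submission imports Defs begin

definition Np :: "real \<Rightarrow> real" where "Np x = 2*x^2 + 2*x^4 - 1"
definition Pp :: "real \<Rightarrow> real" where "Pp x = 1 + 8*x^2 + 8*x^6 - 8*x^8"
definition Wp :: "real \<Rightarrow> real" where "Wp x = 12*x + 24*x^3 + 72*x^5 - 48*x^7 + 48*x^9"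
definition Dp :: "real \<Rightarrow> real" where "Dp x = Np x / sqrt (Pp x)"

lemma poly_id0: "(12*x + 24*x^3 + 72*x^5 - 48*x^7 + 48*x^9)^2 * (x^6 - 1) = 4 * ((2*x^2 + 2*x^4 - 1)^6 - (1 + 8*x^2 + 8*x^6 - 8*x^8)^3)" for x::real
  by (simp add: algebra_simps power_def eval_nat_numeral)

lemma poly_id: "(Wp x)^2 * (x^6 - 1) = 4 * ((Np x)^6 - (Pp x)^3)"
  unfolding Wp_def Np_def Pp_def by (rule poly_id0)

lemma Wp_pos: "x \<ge> 1 \<Longrightarrow> Wp x > 0"
proof -
  assume x: "x \<ge> 1"
  have "x^7 \<le> x^9" using x by (simp add: power_increasing)
  moreover have "x > 0" "x^3 > 0" "x^5 > 0" using x by simp_all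
  ultimately show ?thesis unfolding Wp_def by linarith
qed

lemma Np_pos: "x \<ge> 1 \<Longrightarrow> Np x \<ge> 3"
proof -
  assume x: "x \<ge> 1"
  have "x^2 \<ge> 1" "x^4 \<ge> 1" using x by (simp_all add: one_le_power)
  then show ?thesis unfolding Np_def by simp
qed

lemma Pp_deriv: "(Pp has_real_derivative (16*x + 48*x^5 - 64*x^7)) (at x)"
  unfolding Pp_def[abs_def]
  by (auto intro!: derivative_eq_intros simp: algebra_simps)

lemma Pp_decr: "1 \<le> x \<Longrightarrow> x < y \<Longrightarrow> Pp y < Pp x"
proof -
  assume x: "1 \<le> x" and xy: "x < y"
  show ?thesis
  proof (rule DERIV_neg_imp_decreasing_open[OF xy])
    fix t assume t: "x < t" "t < y"
    have "t > 1" using t x by simp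
    then have "t^1 < t^7" "t^5 < t^7" by (intro power_strict_increasing; simp)+
    moreover have "t^7 > 0" using \<open>t>1\<close> by simp
    ultimately have "16*t + 48*t^5 - 64*t^7 < 0" 
      by (simp only: power_one_right)
    then show "\<exists>y. (Pp has_real_derivative y) (at t) \<and> y < 0" using Pp_deriv by blast
  next
    show "continuous_on {x..y} Pp" unfolding Pp_def by (intro continuous_intros)
  qed
qed

lemma Dp_sq: assumes P: "Pp x > 0" shows "(Dp x)^6 - 1 = (Wp x)^2 * (x^6 - 1) / (4 * (Pp x)^3)"
proof -
  have "(sqrt (Pp x))^6 = ((sqrt (Pp x))^2)^3" by (simp only: power_mult[symmetric]) simp
  also have "\<dots> = (Pp x)^3" using P by simp
  finally have s: "(sqrt (Pp x))^6 = (Pp x)^3" .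
  have P3: "(Pp x)^3 > 0" using P by simp
  have "(Dp x)^6 = (Np x)^6 / (Pp x)^3" unfolding Dp_def power_divide s ..
  then have "(Dp x)^6 - 1 = ((Np x)^6 - (Pp x)^3) / (Pp x)^3"
    using P3 by (simp add: diff_divide_distrib)
  also have "(Np x)^6 - (Pp x)^3 = (Wp x)^2 * (x^6 - 1) / 4" using poly_id[of x] by simp
  finally show ?thesis by simp
qed


abbreviation "gg \<equiv> leaf_integrand 3"
abbreviation "FF r \<equiv> integral {1..r} gg"

lemma g_eq: "gg t = 1 / sqrt (t^6 - 1)" by (simp add: leaf_integrand_def)

lemma g_nonneg: "1 \<le> t \<Longrightarrow> 0 \<le> gg t"
  unfolding g_eq by (simp add: one_le_power)

lemma g_pos: "1 < t \<Longrightarrow> 0 < gg t"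
  unfolding g_eq by (simp add: one_less_power)

lemma g_cont: "1 < t \<Longrightarrow> isCont gg t"
proof -
  assume t: "1 < t"
  have "t^6 > 1" using t by (simp add: one_less_power)
  then have "sqrt (t^6 - 1) \<noteq> 0" by simp
  then show ?thesis unfolding leaf_integrand_def[abs_def] by (intro continuous_intros) auto
qed

lemma loc_int: "gg integrable_on {1..} \<Longrightarrow> gg integrable_on {1..r}"
  by (rule integrable_on_subinterval) auto

lemma F_cont: "gg integrable_on {1..} \<Longrightarrow> continuous_on {1..b} (\<lambda>r. FF r)"
  by (rule indefinite_integral_continuous_1[OF loc_int])

lemma F_deriv:
  assumes I: "gg integrable_on {1..}" and r: "1 < r"
  shows "((\<lambda>r. FF r) has_real_derivative gg r) (at r)"
proof -
  have "((\<lambda>u. FF u) has_vector_derivative gg r) (at r within ({1..r+1} - {}))"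
    by (rule integral_has_vector_derivative_continuous_at[OF loc_int[OF I]])
       (use r g_cont[OF r] in \<open>auto intro: continuous_at_imp_continuous_within\<close>)
  moreover have "at r within ({1..r+1} - {}) = at r"
    by (rule at_within_interior) (use r in auto)
  ultimately show ?thesis by (simp add: has_real_derivative_iff_has_vector_derivative)
qed

lemma F_strict:
  assumes I: "gg integrable_on {1..}" and a: "1 \<le> a" and ab: "a < b"
  shows "FF a < FF b"
proof (rule DERIV_pos_imp_increasing_open[OF ab])
  fix x assume "a < x" "x < b"
  then have x: "1 < x" using a by simp
  show "\<exists>y. ((\<lambda>r. FF r) has_real_derivative y) (at x) \<and> 0 < y"
    using F_deriv[OF I x] g_pos[OF x] by blast
next
  show "continuous_on {a..b} (\<lambda>r. FF r)"
    by (rule continuous_on_subset[OF F_cont[OF I, of b]]) (use a in auto)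
qed

lemma F_big:
  assumes I: "gg integrable_on {1..}" and y: "y < eta 3"
  shows "\<exists>R\<ge>1. y < FF R"
proof -
  define f where "f \<equiv> \<lambda>n::nat. \<lambda>x. if x \<in> {1..real n} then gg x else 0"
  have hf: "(f n has_integral FF (real n)) {1..}" for n
    unfolding f_def by (subst has_integral_restrict) (auto intro: integrable_integral loc_int[OF I])
  have "gg integrable_on {1..} \<and> (\<lambda>n. integral {1..} (f n)) \<longlonglongrightarrow> integral {1..} gg"
  proof (rule monotone_convergence_increasing)
    fix n show "f n integrable_on {1..}" using hf by blast
  next
    fix n :: nat and x :: real assume "x \<in> {1..}"
    then show "f n x \<le> f (Suc n) x" using g_nonneg[of x] by (auto simp: f_def)
  next
    fix x :: real assume x: "x \<in> {1..}"
    have "eventually (\<lambda>n. real n \<ge> x) at_top"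
      by (meson eventually_sequentiallyI nat_ceiling_le_eq)
    with x have "eventually (\<lambda>n. f n x = gg x) at_top"
      by (simp add: eventually_mono f_def)
    thus "(\<lambda>n. f n x) \<longlonglongrightarrow> gg x" by (simp add: tendsto_eventually)
  next
    have "norm (integral {1..} (f n)) \<le> integral {1..} gg" for n
    proof -
      have "integral {1..} (f n) \<ge> 0"
        using hf[of n] by (metis integral_unique Henstock_Kurzweil_Integration.integral_nonneg
           loc_int[OF I] atLeastAtMost_iff g_nonneg)
      moreover have "integral {1..} (f n) \<le> integral {1..} gg"
        by (rule integral_le) (use hf I g_nonneg in \<open>auto simp: f_def\<close>)
      ultimately show ?thesis by simp
    qed
    thus "bounded (range (\<lambda>k. integral {1..} (f k)))"
      by (metis (no_types, lifting) boundedI rangeE)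
  qed
  moreover have e: "integral {1..} (f n) = FF (real n)" for n using hf[of n] by (rule integral_unique)
  ultimately have lim: "(\<lambda>n. FF (real n)) \<longlonglongrightarrow> eta 3"
    by (simp add: eta_def)
  have "eventually (\<lambda>n. y < FF (real n)) sequentially"
    by (rule order_tendstoD(1)[OF lim y])
  moreover have "eventually (\<lambda>n. (1::nat) \<le> n) sequentially" by (rule eventually_ge_at_top)
  ultimately obtain n :: nat where "y < FF (real n)" "1 \<le> n"
    using eventually_happens' by (metis (mono_tags, lifting) eventually_conj eventually_sequentially order_refl)
  then show ?thesis by (intro exI[of _ "real n"]) auto
qed

lemma cleafh_char:
  assumes I: "gg integrable_on {1..}" and r: "1 \<le> r" and Fr: "FF r = \<bar>l\<bar>"
  shows "cleafh 3 l = r"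
  unfolding cleafh_def
proof (rule the_equality)
  show "1 \<le> r \<and> FF r = \<bar>l\<bar>" using r Fr by simp
next
  fix r' assume r': "1 \<le> r' \<and> FF r' = \<bar>l\<bar>"
  show "r' = r"
  proof (rule ccontr)
    assume "r' \<noteq> r"
    then consider "r' < r" | "r < r'" by linarith
    then show False
      by cases (use F_strict[OF I, of r' r] F_strict[OF I, of r r'] r r' Fr in auto)
  qed
qed


lemma Dp_pos: "1 \<le> x \<Longrightarrow> Pp x > 0 \<Longrightarrow> Dp x > 0"
  using Np_pos[of x] unfolding Dp_def by simp

lemma Dp_gt: assumes x: "1 < x" and P: "Pp x > 0" shows "Dp x > 1"
proof -
  have "x^6 > 1" using x by (simp add: one_less_power)
  then have "(Wp x)^2 * (x^6 - 1) / (4 * (Pp x)^3) > 0"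
    using Wp_pos[of x] x P by simp
  then have d6: "(Dp x)^6 > 1" using Dp_sq[OF P] by simp
  show ?thesis
  proof (rule ccontr)
    assume "\<not> Dp x > 1"
    then have "(Dp x)^6 \<le> 1" using Dp_pos[of x] x P by (intro power_le_one) auto
    then show False using d6 by simp
  qed
qed

lemma Dp_one: "Dp 1 = 1"
proof -
  have "sqrt 9 = (3::real)" by (rule real_sqrt_unique) auto
  then show ?thesis unfolding Dp_def Np_def Pp_def by simp
qed

lemma Dp_ge: "1 \<le> x \<Longrightarrow> Pp x > 0 \<Longrightarrow> Dp x \<ge> 1"
  using Dp_gt[of x] Dp_one by (cases "x = 1") auto

lemma Np_deriv: "(Np has_real_derivative (4*x + 8*x^3)) (at x)"
  unfolding Np_def[abs_def]
  by (auto intro!: derivative_eq_intros simp: algebra_simps)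

lemma polyW: "2 * (4*x + 8*x^3) * (1 + 8*x^2 + 8*x^6 - 8*x^8) - (2*x^2 + 2*x^4 - 1) * (16*x + 48*x^5 - 64*x^7) = 2 * (12*x + 24*x^3 + 72*x^5 - 48*x^7 + 48*x^9)" for x :: real
  by (simp add: algebra_simps power_def eval_nat_numeral)

lemma Dp_deriv:
  assumes P: "Pp x > 0"
  shows "(Dp has_real_derivative Wp x / (Pp x * sqrt (Pp x))) (at x)"
proof -
  define s where "s = sqrt (Pp x)"
  have s0: "s > 0" using P by (simp add: s_def)
  have ss: "s * s = Pp x" using P by (simp add: s_def)
  have hS: "((\<lambda>x. sqrt (Pp x)) has_real_derivative
        inverse (sqrt (Pp x)) / 2 * (16*x + 48*x^5 - 64*x^7)) (at x)"
    by (rule DERIV_chain2[OF DERIV_real_sqrt[OF P] Pp_deriv])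
  have "((\<lambda>x. Np x / sqrt (Pp x)) has_real_derivative
     ((4*x + 8*x^3) * sqrt (Pp x) - Np x * (inverse (sqrt (Pp x)) / 2 * (16*x + 48*x^5 - 64*x^7)))
        / (sqrt (Pp x) * sqrt (Pp x))) (at x)"
    by (rule DERIV_divide[OF Np_deriv hS]) (use P in simp)
  moreover have "((4*x + 8*x^3) * sqrt (Pp x) - Np x * (inverse (sqrt (Pp x)) / 2 * (16*x + 48*x^5 - 64*x^7)))
        / (sqrt (Pp x) * sqrt (Pp x)) = Wp x / (Pp x * sqrt (Pp x))"
  proof -
    have "((4*x + 8*x^3) * s - Np x * (inverse s / 2 * (16*x + 48*x^5 - 64*x^7))) / (s * s)
        = (2 * (4*x + 8*x^3) * (s * s) - Np x * (16*x + 48*x^5 - 64*x^7)) / (2 * (s * s) * s)"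
      using s0 by (simp add: field_simps)
    also have "\<dots> = (2 * (4*x + 8*x^3) * Pp x - Np x * (16*x + 48*x^5 - 64*x^7)) / (2 * Pp x * s)"
      by (simp add: ss)
    also have "2 * (4*x + 8*x^3) * Pp x - Np x * (16*x + 48*x^5 - 64*x^7) = 2 * Wp x"
      unfolding Np_def Pp_def Wp_def by (rule polyW)
    finally show ?thesis using s0 by (simp add: s_def field_simps)
  qed
  ultimately show ?thesis unfolding Dp_def[abs_def] by simp
qed

lemma key_deriv:
  assumes I: "gg integrable_on {1..}" and x: "1 < x" and P: "Pp x > 0"
  shows "((\<lambda>x. FF (Dp x) - 2 * FF x) has_real_derivative 0) (at x)"
proof -
  have D1: "Dp x > 1" by (rule Dp_gt[OF x P])
  have h: "((\<lambda>x. FF (Dp x) - 2 * FF x) has_real_derivative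
       gg (Dp x) * (Wp x / (Pp x * sqrt (Pp x))) - 2 * gg x) (at x)"
    by (rule DERIV_diff[OF DERIV_chain2[OF F_deriv[OF I D1] Dp_deriv[OF P]] DERIV_cmult[OF F_deriv[OF I x]]])
  define s where "s = sqrt (Pp x)"
  have s0: "s > 0" using P by (simp add: s_def)
  have ss: "s^2 = Pp x" using P by (simp add: s_def)
  have x6: "x^6 - 1 > 0" using x by (simp add: one_less_power)
  define q where "q = sqrt (x^6 - 1)"
  have q0: "q > 0" using x6 by (simp add: q_def)
  have qq: "q^2 = x^6 - 1" using x6 by (simp add: q_def)
  have W0: "Wp x > 0" using Wp_pos[of x] x by simp
  have sq: "sqrt ((Dp x)^6 - 1) = Wp x * q / (2 * Pp x * s)"
  proof (rule real_sqrt_unique)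
    have "(Wp x * q / (2 * Pp x * s))^2 = (Wp x)^2 * q^2 / (4 * (Pp x)^2 * s^2)"
      by (simp add: power_divide power_mult_distrib)
    also have "\<dots> = (Wp x)^2 * (x^6 - 1) / (4 * ((Pp x)^2 * Pp x))"
      by (simp only: qq ss mult.assoc)
    also have "(Pp x)^2 * Pp x = (Pp x)^3" by (simp add: power2_eq_square power3_eq_cube)
    finally show "(Wp x * q / (2 * Pp x * s))^2 = (Dp x)^6 - 1"
      unfolding Dp_sq[OF P] .
    show "0 \<le> Wp x * q / (2 * Pp x * s)" using W0 q0 P s0 by simp
  qed
  have "gg (Dp x) * (Wp x / (Pp x * sqrt (Pp x))) - 2 * gg x = 0"
    unfolding g_eq sq s_def[symmetric] q_def[symmetric] using W0 q0 P s0 by (simp add: field_simps)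
  with h show ?thesis by simp
qed

lemma doubling:
  assumes I: "gg integrable_on {1..}" and c: "1 \<le> c" and P: "Pp c > 0"
  shows "FF (Dp c) = 2 * FF c"
proof (cases "c = 1")
  case True then show ?thesis by (simp add: Dp_one)
next
  case False
  then have c1: "1 < c" using c by simp
  have Pge: "Pp x > 0" if "1 \<le> x" "x \<le> c" for x
    using Pp_decr[of x c] that P by (cases "x = c") auto
  have Pc: "continuous_on {1..c} Pp" unfolding Pp_def[abs_def] by (intro continuous_intros)
  have Nc: "continuous_on {1..c} Np" unfolding Np_def[abs_def] by (intro continuous_intros)
  have Dcont: "continuous_on {1..c} Dp"
    unfolding Dp_def[abs_def]
    by (intro continuous_intros Pc Nc) (use Pge in force)
  obtain xm where xm: "xm \<in> {1..c}" "\<And>y. y \<in> {1..c} \<Longrightarrow> Dp y \<le> Dp xm"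
    using continuous_attains_sup[OF compact_Icc _ Dcont] c by auto
  have img: "Dp ` {1..c} \<subseteq> {1..Dp xm}" using xm Dp_ge Pge by auto
  have cont: "continuous_on {1..c} (\<lambda>x. FF (Dp x) - 2 * FF x)"
    by (intro continuous_intros continuous_on_compose2[OF F_cont[OF I] Dcont img]
        continuous_on_subset[OF F_cont[OF I, of c]]) auto
  have "FF (Dp c) - 2 * FF c = FF (Dp 1) - 2 * FF 1"
    by (rule DERIV_isconst2[OF c1 cont, of c])
       (use key_deriv[OF I] Pge c in auto)
  then show ?thesis by (simp add: Dp_one)
qed


theorem mainTheorem11:
  fixes l :: real
  assumes "- eta 3 < 2 * l" and "2 * l < eta 3"
  shows "cleafh 3 (2 * l) =
    (2 * (cleafh 3 l)^2 + 2 * (cleafh 3 l)^4 - 1) /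
    sqrt (1 + 8 * (cleafh 3 l)^2 + 8 * (cleafh 3 l)^6 - 8 * (cleafh 3 l)^8)"
proof (cases "gg integrable_on {1..}")
  case False
  then have "eta 3 = 0" by (simp add: eta_def not_integrable_integral)
  with assms show ?thesis by simp
next
  case I: True
  define y where "y = \<bar>2 * l\<bar>"
  have y: "y < eta 3" using assms by (auto simp: y_def)
  obtain R where R: "R \<ge> 1" "y < FF R" using F_big[OF I y] by blast
  have "\<exists>r. 1 \<le> r \<and> r \<le> R \<and> FF r = y"
    by (rule IVT') (use R F_cont[OF I, of R] in \<open>auto simp: y_def\<close>)
  then obtain r where r: "1 \<le> r" "r \<le> R" "FF r = y" by blast
  have cl2: "cleafh 3 (2 * l) = r" by (rule cleafh_char[OF I r(1)]) (simp add: r y_def)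
  define h where "h x = (Np x)^2 - r^2 * Pp x" for x
  have r2: "r^2 \<ge> 1" using r by (simp add: one_le_power)
  have h1: "h 1 \<le> 0" using r2 by (simp add: h_def Np_def Pp_def)
  have h2: "0 \<le> h 2" using r2 by (simp add: h_def Np_def Pp_def)
  have hc: "continuous_on {1..2} h"
    unfolding h_def[abs_def] Np_def Pp_def by (intro continuous_intros)
  obtain c where c: "1 \<le> c" "c \<le> 2" "h c = 0"
    using IVT'[of h 1 0 2, OF h1 h2 _ hc] by auto
  have N3: "Np c \<ge> 3" by (rule Np_pos[OF c(1)])
  have r0: "r > 0" using r by simp
  have NP: "(Np c)^2 = r^2 * Pp c" using c(3) by (simp add: h_def)
  have Pc: "Pp c = (Np c / r)^2" unfolding power_divide NP using r0 by simp
  have Ppos: "Pp c > 0" using Pc N3 r0 by simp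
  have "sqrt (Pp c) = Np c / r" by (rule real_sqrt_unique) (use Pc N3 r0 in auto)
  then have Dc: "Dp c = r" using N3 r0 by (simp add: Dp_def)
  have "FF r = 2 * FF c" using doubling[OF I c(1) Ppos] Dc by simp
  then have "FF c = \<bar>l\<bar>" using r(3) by (simp add: y_def abs_mult)
  then have cl: "cleafh 3 l = c" by (rule cleafh_char[OF I c(1)])
  show ?thesis unfolding cl2 cl using Dc[symmetric] unfolding Dp_def Np_def Pp_def .
qed

end
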